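(* For every fixed integer $k\ge 1$ there exists a constant $C_k$ such that the following holds: for every integer $d\ge k$ and every polynomial $P(x)=\sum_{n=0}^d a_nx^n$ with real coefficients and $\|P\|_{[-1,1]}\le 1$, the polynomial $P_{\ge k}(x)=\sum_{n=0}^{d-k}a_{n+k}x^n$ satisfies $$\|P_{\ge k}\|_{[-1,1]}\le C_k\, d^{k}\sqrt{d}.$$ (The paper states this as $\|P_{\ge k}\|_{[-1,1]}\le O\big(\tfrac{d^k}{k!}\sqrt{d/k}\big)$, in particular polynomial in $d$.)
   Context: For a function $f$ on $[-1,1]$, $\|f\|_{[-1,1]}:=\max_{x\in[-1,1]}|f(x)|$. The polynomial $P_{\ge k}$ is the "high-order constituent polynomial" of $P$, defined by the decomposition $P(x)=\sum_{n=0}^{k-1}a_nx^n+x^kP_{\ge k}(x)$. *)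

theory Defs
  imports "HOL-Analysis.Analysis" "HOL-Computational_Algebra.Polynomial"
begin

definition sup_norm_11 :: "(real \<Rightarrow> real) \<Rightarrow> real" where
  "sup_norm_11 f = (SUP x\<in>{-1..1}. \<bar>f x\<bar>)"

definition high_part :: "nat \<Rightarrow> real poly \<Rightarrow> real poly" where
  "high_part k P = Abs_poly (\<lambda>n. coeff P (n + k))"

end

theory Submission
  imports Defs
begin


lemma coeff_hp [simp]: "coeff (high_part k P) n = coeff P (n + k)"
proof -
  have "coeff (Abs_poly (\<lambda>n. coeff P (n + k))) = (\<lambda>n. coeff P (n + k))"
    by (rule coeff_Abs_poly[where n="degree P"]) (simp add: coeff_eq_0)
  thus ?thesis by (simp add: high_part_def)
qed

lemma hp_diff: "high_part k (p - q) = high_part k p - high_part k q"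
  by (rule poly_eqI) simp
lemma hp_add: "high_part k (p + q) = high_part k p + high_part k q"
  by (rule poly_eqI) simp
lemma hp_smult: "high_part k (smult c p) = smult c (high_part k p)"
  by (rule poly_eqI) simp
lemma hp_sum: "high_part k (\<Sum>m\<in>A. f m) = (\<Sum>m\<in>A. high_part k (f m))"
  by (rule poly_eqI) (simp add: coeff_sum)
lemma hp_0: "high_part 0 p = p"
  by (rule poly_eqI) simp
lemma hp_zero: "high_part k 0 = 0"
  by (rule poly_eqI) simp
lemma hp_pCons: "high_part (Suc k) (pCons a p) = high_part k p"
  by (rule poly_eqI) simp
lemma hp_split: "high_part k P = pCons (coeff P k) (high_part (Suc k) P)"
  by (rule poly_eqI) (simp add: coeff_pCons split: nat.split)

lemma hp_identity:
  "poly P x = (\<Sum>j<k. coeff P j * x ^ j) + x ^ k * poly (high_part k P) x"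
proof (induction k arbitrary: P)
  case 0 then show ?case by (simp add: hp_0)
next
  case (Suc k)
  have e: "P = pCons (coeff P 0) (high_part 1 P)"
    using hp_split[of 0 P] by (simp add: hp_0)
  have "poly P x = coeff P 0 + x * poly (high_part 1 P) x"
    by (subst e) simp
  also have "poly (high_part 1 P) x = (\<Sum>j<k. coeff P (Suc j) * x ^ j) + x ^ k * poly (high_part (Suc k) P) x"
  proof -
    have "high_part k (high_part 1 P) = high_part (Suc k) P"
      by (rule poly_eqI) simp
    thus ?thesis using Suc[of "high_part 1 P"] by simp
  qed
  finally have f: "poly P x = coeff P 0 + x * ((\<Sum>j<k. coeff P (Suc j) * x ^ j) + x ^ k * poly (high_part (Suc k) P) x)" .
  have s: "(\<Sum>j<Suc k. coeff P j * x ^ j) = coeff P 0 + (\<Sum>j<k. coeff P (Suc j) * x ^ Suc j)"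
    by (subst sum.lessThan_Suc_shift) simp
  show ?case unfolding s f
    by (simp add: sum_distrib_left algebra_simps)
qed

fun T :: "nat \<Rightarrow> real poly" where
  "T 0 = 1"
| "T (Suc 0) = [:0, 1:]"
| "T (Suc (Suc m)) = pCons 0 (smult 2 (T (Suc m))) - T m"

lemma T_cos: "poly (T m) (cos t) = cos (real m * t)"
proof (induction m rule: T.induct)
  case 1 then show ?case by simp
next
  case 2 then show ?case by simp
next
  case (3 m)
  have "cos (real (Suc (Suc m)) * t) = 2 * cos t * cos (real (Suc m) * t) - cos (real m * t)"
  proof -
    have a: "real (Suc (Suc m)) * t = real (Suc m) * t + t" and b: "real m * t = real (Suc m) * t - t"
      by (simp_all add: algebra_simps)
    show ?thesis unfolding a b cos_add cos_diff by simp
  qed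
  then show ?case using 3 by simp
qed

lemma T_bound: "\<bar>x\<bar> \<le> 1 \<Longrightarrow> \<bar>poly (T m) x\<bar> \<le> 1"
  using T_cos[of m "arccos x"] by (simp add: cos_arccos_abs)

lemma T_deg: "degree (T m) \<le> m \<and> coeff (T m) m = (if m = 0 then 1 else 2 ^ (m - 1))"
proof (induction m rule: T.induct)
  case 1 then show ?case by simp
next
  case 2 then show ?case by simp
next
  case (3 m)
  have d: "degree (T (Suc (Suc m))) \<le> Suc (Suc m)"
    using 3 by (simp add: degree_diff_le degree_pCons_le le_trans[OF degree_smult_le])
  have "coeff (T m) (Suc (Suc m)) = 0"
    using 3 by (simp add: coeff_eq_0)
  then show ?case using 3 d by simp
qed



lemma T_lead_nz: "coeff (T m) m \<noteq> 0"
  using T_deg[of m] by simp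

lemma expansion: "degree P \<le> d \<Longrightarrow> \<exists>c. P = (\<Sum>m\<le>d. smult (c m) (T m))"
proof (induction d arbitrary: P)
  case 0
  then have "P = [:coeff P 0:]" by (metis degree_0_id le_zero_eq)
  then have "P = smult (coeff P 0) (T 0)" by simp
  then show ?case by (intro exI[of _ "\<lambda>_. coeff P 0"]) simp
next
  case (Suc d)
  define a where "a = coeff P (Suc d) / coeff (T (Suc d)) (Suc d)"
  define P' where "P' = P - smult a (T (Suc d))"
  have c: "coeff P' (Suc d) = 0"
    using T_lead_nz[of "Suc d"] by (simp add: P'_def a_def)
  have dd: "degree P' \<le> Suc d"
    unfolding P'_def using Suc.prems T_deg[of "Suc d"]
    by (metis degree_diff_le degree_smult_le le_trans)
  have "degree P' \<le> d"
  proof (rule ccontr)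
    assume "\<not> degree P' \<le> d"
    then have "degree P' = Suc d" using dd by simp
    then have "P' \<noteq> 0" by auto
    then have "coeff P' (degree P') \<noteq> 0" by simp
    then show False using c \<open>degree P' = Suc d\<close> by simp
  qed
  then obtain c where cP: "P' = (\<Sum>m\<le>d. smult (c m) (T m))" using Suc.IH by blast
  have "P = (\<Sum>m\<le>Suc d. smult ((c(Suc d := a)) m) (T m))"
  proof -
    have "(\<Sum>m\<le>d. smult ((c(Suc d := a)) m) (T m)) = (\<Sum>m\<le>d. smult (c m) (T m))"
      by (rule sum.cong) auto
    then show ?thesis using cP by (simp add: P'_def)
  qed
  then show ?case by blast
qed

definition th :: "nat \<Rightarrow> nat \<Rightarrow> real" where
  "th N l = (2 * real l + 1) * pi / (2 * real N)"

lemma cos_sum_zero: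
  assumes "0 < j" "j < 2 * N"
  shows "(\<Sum>l<N. cos (real j * th N l)) = 0"
proof -
  have N: "N > 0" using assms by simp
  define a where "a = real j * pi / (2 * real N)"
  have a0: "sin a > 0"
    unfolding a_def using assms by (intro sin_gt_zero) (auto simp: field_simps)
  define f where "f l = sin (real j * real l * pi / real N)" for l :: nat
  have t: "2 * sin a * cos (real j * th N l) = f (Suc l) - f l" for l
  proof -
    have e1: "real j * real (Suc l) * pi / real N = real j * th N l + a"
      and e2: "real j * real l * pi / real N = real j * th N l - a"
      using N by (simp_all add: th_def a_def field_simps)
    show ?thesis unfolding f_def e1 e2 sin_add sin_diff by simp
  qed
  have "2 * sin a * (\<Sum>l<N. cos (real j * th N l)) = (\<Sum>l<N. f (Suc l) - f l)"
    by (simp add: sum_distrib_left t)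
  also have "\<dots> = f N - f 0" by (rule sum_lessThan_telescope)
  also have "\<dots> = 0"
  proof -
    have "real j * real N * pi / real N = real j * pi" using N by simp
    then show ?thesis unfolding f_def by simp
  qed
  finally show ?thesis using a0 by simp
qed

lemma cos_sum_zero': "(\<Sum>l<N. cos (0 * th N l)) = real N" by simp

lemma orth:
  assumes "m < N" "n < N"
  shows "(\<Sum>l<N. cos (real m * th N l) * cos (real n * th N l)) =
         (if m \<noteq> n then 0 else if m = 0 then real N else real N / 2)"
proof -
  have pr: "cos (real m * t) * cos (real n * t) = (cos (real (m + n) * t) + cos (real (if m \<le> n then n - m else m - n) * t)) / 2" for t
  proof -
    have "cos (real (if m \<le> n then n - m else m - n) * t) = cos (real m * t - real n * t)"
    proof (cases "m \<le> n")
      case True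
      then have "real (n - m) * t = - (real m * t - real n * t)" by (simp add: of_nat_diff algebra_simps)
      then show ?thesis using True by (simp only: if_True) (metis cos_minus)
    next
      case False
      then show ?thesis by (simp add: of_nat_diff algebra_simps)
    qed
    moreover have "real (m + n) * t = real m * t + real n * t" by (simp add: algebra_simps)
    ultimately show ?thesis by (simp add: cos_add cos_diff)
  qed
  have "(\<Sum>l<N. cos (real m * th N l) * cos (real n * th N l)) =
     ((\<Sum>l<N. cos (real (m + n) * th N l)) + (\<Sum>l<N. cos (real (if m \<le> n then n - m else m - n) * th N l))) / 2"
    unfolding pr by (simp only: sum.distrib[symmetric] sum_divide_distrib)
  moreover have "m + n > 0 \<Longrightarrow> (\<Sum>l<N. cos (real (m + n) * th N l)) = 0"
    using assms by (intro cos_sum_zero) auto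
  moreover have "m \<noteq> n \<Longrightarrow> (\<Sum>l<N. cos (real (if m \<le> n then n - m else m - n) * th N l)) = 0"
    using assms by (intro cos_sum_zero) auto
  ultimately show ?thesis by auto
qed

lemma parseval:
  assumes "P = (\<Sum>m\<le>d. smult (c m) (T m))"
    and bd: "\<And>x. \<bar>x\<bar> \<le> 1 \<Longrightarrow> \<bar>poly P x\<bar> \<le> 1"
  shows "(\<Sum>m\<le>d. (c m)\<^sup>2) \<le> 2"
proof -
  define N where "N = Suc d"
  have Np: "real N > 0" by (simp add: N_def)
  have pv: "poly P (cos (th N l)) = (\<Sum>m\<le>d. c m * cos (real m * th N l))" for l
    unfolding assms(1) by (simp add: poly_sum T_cos)
  have "(\<Sum>l<N. (poly P (cos (th N l)))\<^sup>2) \<le> (\<Sum>l<N. 1)"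
    by (intro sum_mono) (simp add: abs_square_le_1 bd)
  then have A: "(\<Sum>l<N. (poly P (cos (th N l)))\<^sup>2) \<le> real N" by simp
  have "(\<Sum>l<N. (poly P (cos (th N l)))\<^sup>2) =
        (\<Sum>l<N. \<Sum>m\<le>d. \<Sum>n\<le>d. c m * c n * (cos (real m * th N l) * cos (real n * th N l)))"
    unfolding pv power2_eq_square sum_product by (simp add: algebra_simps)
  also have "\<dots> = (\<Sum>m\<le>d. \<Sum>n\<le>d. c m * c n * (\<Sum>l<N. cos (real m * th N l) * cos (real n * th N l)))"
    by (simp add: sum.swap[of _ "{..<N}"] sum_distrib_left)
  also have "\<dots> = (\<Sum>m\<le>d. \<Sum>n\<le>d. if n = m then c m * c m * (if m = 0 then real N else real N / 2) else 0)"
  proof -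
    have o: "(\<Sum>l<N. cos (real m * th N l) * cos (real n * th N l)) =
         (if m \<noteq> n then 0 else if m = 0 then real N else real N / 2)" if "m \<le> d" "n \<le> d" for m n
      using that by (intro orth) (auto simp: N_def)
    show ?thesis by (intro sum.cong refl) (simp add: o)
  qed
  also have "\<dots> = (\<Sum>m\<le>d. c m * c m * (if m = 0 then real N else real N / 2))"
    by simp
  also have "\<dots> \<ge> (\<Sum>m\<le>d. (c m)\<^sup>2 * (real N / 2))"
    by (intro sum_mono) (auto simp: power2_eq_square mult_right_mono)
  finally have B: "(\<Sum>m\<le>d. (c m)\<^sup>2 * (real N / 2)) \<le> (\<Sum>l<N. (poly P (cos (th N l)))\<^sup>2)" .
  have "(\<Sum>m\<le>d. (c m)\<^sup>2) * (real N / 2) = (\<Sum>m\<le>d. (c m)\<^sup>2 * (real N / 2))"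
    by (rule sum_distrib_right)
  then have "(\<Sum>m\<le>d. (c m)\<^sup>2) * (real N / 2) \<le> real N"
    using A B by linarith
  then show ?thesis using Np by (simp add: field_simps)
qed



definition R :: "nat \<Rightarrow> nat \<Rightarrow> real \<Rightarrow> real" where
  "R k m x = poly (high_part k (T m)) x"

lemma R_at0: "R k m 0 = coeff (T m) k"
  unfolding R_def by (simp add: poly_0_coeff_0)

lemma R_rec: "R (Suc k) (Suc (Suc m)) x = 2 * x * R (Suc k) (Suc m) x - R (Suc k) m x + 2 * R k (Suc m) 0"
proof -
  have "high_part (Suc k) (T (Suc (Suc m))) =
        smult 2 (pCons (coeff (T (Suc m)) k) (high_part (Suc k) (T (Suc m)))) - high_part (Suc k) (T m)"
    by (rule poly_eqI) (simp add: coeff_pCons split: nat.split)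
  then have "poly (high_part (Suc k) (T (Suc (Suc m)))) x =
        poly (smult 2 (pCons (coeff (T (Suc m)) k) (high_part (Suc k) (T (Suc m)))) - high_part (Suc k) (T m)) x"
    by (simp only:)
  then show ?thesis unfolding R_def R_at0[unfolded R_def] by (simp add: algebra_simps)
qed

lemma R_init0: "R (Suc k) 0 x = 0"
proof -
  have "T 0 = pCons 1 0" by simp
  then show ?thesis unfolding R_def by (simp only: hp_pCons hp_zero) simp
qed

lemma R_init1: "\<bar>R (Suc k) 1 x\<bar> \<le> 1"
proof -
  have "T 1 = pCons 0 (pCons 1 0)" by simp
  then have e: "high_part (Suc k) (T 1) = high_part k (pCons 1 0)" by (simp only: hp_pCons)
  show ?thesis
  proof (cases k)
    case 0 then show ?thesis unfolding R_def e by (simp add: hp_0)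
  next
    case (Suc k') then show ?thesis unfolding R_def e by (simp add: hp_pCons hp_zero)
  qed
qed

fun A :: "nat \<Rightarrow> real" where
  "A 0 = 1"
| "A (Suc k) = 4 + 4 * A k"

lemma A_pos: "A k \<ge> 0"
  by (induction k) auto

context
  fixes x :: real
  assumes x: "\<bar>x\<bar> \<le> 1/2"
begin

definition Q :: "real \<Rightarrow> real \<Rightarrow> real" where
  "Q a b = a\<^sup>2 - 2 * x * a * b + b\<^sup>2"

lemma Q_ge: "(a\<^sup>2 + b\<^sup>2) / 2 \<le> Q a b"
proof -
  have "\<bar>2 * x * a * b\<bar> \<le> \<bar>a * b\<bar>"
  proof -
    have "\<bar>x\<bar> * (\<bar>a\<bar> * \<bar>b\<bar>) \<le> (1/2) * (\<bar>a\<bar> * \<bar>b\<bar>)"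
      using x by (intro mult_right_mono) auto
    then show ?thesis by (simp add: abs_mult)
  qed
  moreover have "2 * \<bar>a * b\<bar> \<le> a\<^sup>2 + b\<^sup>2"
  proof -
    have "0 \<le> (\<bar>a\<bar> - \<bar>b\<bar>)\<^sup>2" by simp
    moreover have "(\<bar>a\<bar> - \<bar>b\<bar>)\<^sup>2 = a\<^sup>2 + b\<^sup>2 - 2 * \<bar>a * b\<bar>"
      by (simp add: power2_diff abs_mult)
    ultimately show ?thesis by linarith
  qed
  moreover have "2 * x * a * b \<le> \<bar>2 * x * a * b\<bar>" by (rule abs_ge_self)
  ultimately show ?thesis unfolding Q_def by argo
qed

lemma Q_nonneg: "Q a b \<ge> 0"
proof -
  have "0 \<le> (a\<^sup>2 + b\<^sup>2) / 2" by simp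
  then show ?thesis using Q_ge[of a b] by argo
qed

lemma E_snd: "\<bar>b\<bar> \<le> 2 * sqrt (Q a b)"
proof -
  have "0 \<le> a\<^sup>2" "0 \<le> b\<^sup>2" by simp_all
  then have "b\<^sup>2 \<le> 4 * Q a b" using Q_ge[of a b] by argo
  then have "sqrt (b\<^sup>2) \<le> sqrt (4 * Q a b)" by (rule real_sqrt_le_mono)
  then show ?thesis by (simp add: real_sqrt_mult)
qed

lemma E_fst: "sqrt (Q a 0) = \<bar>a\<bar>"
  unfolding Q_def by simp

lemma E_tri: "sqrt (Q (a + f) b) \<le> sqrt (Q a b) + \<bar>f\<bar>"
proof -
  have x2: "x\<^sup>2 \<le> 1" using x by (simp add: abs_square_le_1)
  have "(a - x * b)\<^sup>2 \<le> Q a b"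
  proof -
    have "Q a b - (a - x * b)\<^sup>2 = (1 - x\<^sup>2) * b\<^sup>2" unfolding Q_def by (simp add: power2_eq_square algebra_simps)
    moreover have "(1 - x\<^sup>2) * b\<^sup>2 \<ge> 0" using x2 by simp
    ultimately show ?thesis by linarith
  qed
  then have "\<bar>a - x * b\<bar> \<le> sqrt (Q a b)" using real_le_rsqrt by simp
  then have h: "f * (a - x * b) \<le> \<bar>f\<bar> * sqrt (Q a b)"
    by (metis abs_ge_self abs_mult abs_ge_zero mult_left_mono order_trans)
  have "Q (a + f) b = Q a b + 2 * f * (a - x * b) + f\<^sup>2"
    unfolding Q_def by (simp add: power2_eq_square algebra_simps)
  also have "\<dots> \<le> (sqrt (Q a b) + \<bar>f\<bar>)\<^sup>2"
    using h Q_nonneg[of a b] by (simp add: power2_eq_square algebra_simps)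
  finally have "sqrt (Q (a + f) b) \<le> sqrt ((sqrt (Q a b) + \<bar>f\<bar>)\<^sup>2)" by (rule real_sqrt_le_mono)
  moreover have "sqrt ((sqrt (Q a b) + \<bar>f\<bar>)\<^sup>2) = sqrt (Q a b) + \<bar>f\<bar>"
    using Q_nonneg[of a b] by (simp only: real_sqrt_abs) (simp add: abs_of_nonneg)
  ultimately show ?thesis by simp
qed

lemma Q_rot: "Q (2 * x * a - b) a = Q a b"
  unfolding Q_def by (simp add: power2_eq_square algebra_simps)

end

lemma interior: "\<bar>x\<bar> \<le> 1/2 \<Longrightarrow> \<bar>R k m x\<bar> \<le> A k * (real m + 1) ^ k"
proof (induction k arbitrary: m x)
  case 0
  then show ?case unfolding R_def by (simp add: hp_0 T_bound)
next
  case (Suc k)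
  note x = Suc.prems
  define e where "e m = sqrt (Q x (R (Suc k) (Suc m) x) (R (Suc k) m x))" for m
  have f: "\<bar>2 * R k (Suc m) 0\<bar> \<le> 2 * A k * (real m + 2) ^ k" for m
    using Suc.IH[of 0 "Suc m"] by (simp add: add.commute)
  have em: "e m \<le> 2 + 2 * A k * real m * (real m + 1) ^ k" for m
  proof (induction m)
    case 0
    then show ?case unfolding e_def using R_init1[of k x] by (simp add: R_init0 E_fst[OF x])
  next
    case (Suc m)
    have "e (Suc m) = sqrt (Q x (2 * x * R (Suc k) (Suc m) x - R (Suc k) m x + 2 * R k (Suc m) 0) (R (Suc k) (Suc m) x))"
      unfolding e_def by (simp add: R_rec)
    also have "\<dots> \<le> sqrt (Q x (2 * x * R (Suc k) (Suc m) x - R (Suc k) m x) (R (Suc k) (Suc m) x)) + \<bar>2 * R k (Suc m) 0\<bar>"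
      by (rule E_tri[OF x])
    also have "\<dots> = e m + \<bar>2 * R k (Suc m) 0\<bar>"
      unfolding e_def by (simp add: Q_rot[OF x])
    also have "\<dots> \<le> 2 + 2 * A k * real m * (real m + 1) ^ k + 2 * A k * (real m + 2) ^ k"
      using Suc.IH f[of m] by linarith
    also have "\<dots> \<le> 2 + 2 * A k * real (Suc m) * (real (Suc m) + 1) ^ k"
    proof -
      have "(real m + 1) ^ k \<le> (real m + 2) ^ k" by (intro power_mono) auto
      then have "A k * real m * (real m + 1) ^ k \<le> A k * real m * (real m + 2) ^ k"
        using A_pos[of k] by (intro mult_left_mono) auto
      then show ?thesis by (simp add: algebra_simps add_ac)
    qed
    finally show ?case .
  qed
  have "\<bar>R (Suc k) m x\<bar> \<le> 2 * e m" unfolding e_def by (rule E_snd[OF x])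
  also have "\<dots> \<le> 4 + 4 * A k * real m * (real m + 1) ^ k" using em[of m] by simp
  also have "\<dots> \<le> A (Suc k) * (real m + 1) ^ Suc k"
  proof -
    have o: "1 \<le> (real m + 1) ^ Suc k" by (rule one_le_power) simp
    have "real m * (real m + 1) ^ k \<le> (real m + 1) ^ Suc k" by (simp add: mult_right_mono)
    then have "A k * (real m * (real m + 1) ^ k) \<le> A k * (real m + 1) ^ Suc k"
      using A_pos[of k] by (intro mult_left_mono) auto
    then have "A k * real m * (real m + 1) ^ k \<le> A k * (real m + 1) ^ Suc k" by (simp add: mult.assoc)
    then show ?thesis using o by (simp add: algebra_simps)
  qed
  finally show ?case .
qed

definition K :: "nat \<Rightarrow> real" where
  "K k = 2 ^ k * (1 + (\<Sum>j<k. A j)) + A k"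

lemma R_bound: "\<bar>x\<bar> \<le> 1 \<Longrightarrow> \<bar>R k m x\<bar> \<le> K k * (real m + 1) ^ k"
proof (cases "\<bar>x\<bar> \<le> 1/2")
  case True
  have "A k \<le> K k" unfolding K_def using A_pos by (simp add: sum_nonneg)
  then have "A k * (real m + 1) ^ k \<le> K k * (real m + 1) ^ k" by (intro mult_right_mono) auto
  then show ?thesis using interior[OF True, of k m] by linarith
next
  case False
  assume x1: "\<bar>x\<bar> \<le> 1"
  have id: "poly (T m) x = (\<Sum>j<k. R j m 0 * x ^ j) + x ^ k * R k m x"
    using hp_identity[of "T m" x k] unfolding R_at0 unfolding R_def .
  have cj: "\<bar>R j m 0 * x ^ j\<bar> \<le> A j * (real m + 1) ^ k" if "j < k" for j
  proof -
    have "\<bar>R j m 0 * x ^ j\<bar> \<le> \<bar>R j m 0\<bar>"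
      using x1 by (simp add: abs_mult power_abs power_le_one mult_left_le)
    also have "\<dots> \<le> A j * (real m + 1) ^ j" using interior[of 0 j m] by simp
    also have "\<dots> \<le> A j * (real m + 1) ^ k"
      using that A_pos[of j] by (intro mult_left_mono power_increasing) auto
    finally show ?thesis .
  qed
  have "\<bar>x ^ k * R k m x\<bar> \<le> \<bar>poly (T m) x\<bar> + \<bar>\<Sum>j<k. R j m 0 * x ^ j\<bar>"
    using id by linarith
  also have "\<dots> \<le> 1 + (\<Sum>j<k. A j * (real m + 1) ^ k)"
  proof -
    have "(\<Sum>j<k. \<bar>R j m 0 * x ^ j\<bar>) \<le> (\<Sum>j<k. A j * (real m + 1) ^ k)"
      by (rule sum_mono) (simp add: cj)
    then show ?thesis
      using T_bound[OF x1, of m] sum_abs[of "\<lambda>j. R j m 0 * x ^ j" "{..<k}"] by linarith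
  qed
  also have "\<dots> \<le> (1 + (\<Sum>j<k. A j)) * (real m + 1) ^ k"
    by (simp add: sum_distrib_right algebra_simps)
  finally have h: "\<bar>x\<bar> ^ k * \<bar>R k m x\<bar> \<le> (1 + (\<Sum>j<k. A j)) * (real m + 1) ^ k"
    by (simp add: abs_mult power_abs)
  have xk: "(1/2) ^ k \<le> \<bar>x\<bar> ^ k" using False by (intro power_mono) auto
  have "(1/2) ^ k * \<bar>R k m x\<bar> \<le> (1 + (\<Sum>j<k. A j)) * (real m + 1) ^ k"
    using order_trans[OF mult_right_mono[OF xk abs_ge_zero] h] .
  then have "\<bar>R k m x\<bar> \<le> 2 ^ k * ((1 + (\<Sum>j<k. A j)) * (real m + 1) ^ k)"
    by (simp add: field_simps power_divide)
  also have "\<dots> \<le> K k * (real m + 1) ^ k"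
    unfolding K_def using A_pos[of k] by (simp add: algebra_simps)
  finally show ?thesis .
qed



lemma sup_bound:
  assumes "sup_norm_11 (poly P) \<le> 1" "\<bar>x\<bar> \<le> 1"
  shows "\<bar>poly P x\<bar> \<le> 1"
proof -
  have "compact ((\<lambda>x. \<bar>poly P x\<bar>) ` {-1..1::real})"
    by (intro compact_continuous_image continuous_intros) auto
  then have b: "bdd_above ((\<lambda>x. \<bar>poly P x\<bar>) ` {-1..1::real})"
    by (intro bounded_imp_bdd_above compact_imp_bounded)
  have "x \<in> {-1..1}" using assms(2) by auto
  then have "\<bar>poly P x\<bar> \<le> sup_norm_11 (poly P)"
    unfolding sup_norm_11_def by (rule cSUP_upper[OF _ b])
  then show ?thesis using assms(1) by linarith
qed

lemma K_nonneg: "K k \<ge> 0"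
  unfolding K_def using A_pos by (simp add: sum_nonneg)

theorem mainTheorem5:
  fixes k :: nat
  assumes "k \<ge> 1"
  shows "\<exists>C::real. \<forall>(d::nat) (P::real poly).
           d \<ge> k \<longrightarrow> degree P \<le> d \<longrightarrow> sup_norm_11 (poly P) \<le> 1 \<longrightarrow>
           sup_norm_11 (poly (high_part k P)) \<le> C * real d ^ k * sqrt (real d)"
proof (intro exI allI impI)
  fix d :: nat and P :: "real poly"
  assume dk: "d \<ge> k" and deg: "degree P \<le> d" and sn: "sup_norm_11 (poly P) \<le> 1"
  have d1: "real d \<ge> 1" using dk assms by simp
  obtain c where cP: "P = (\<Sum>m\<le>d. smult (c m) (T m))" using expansion[OF deg] by blast
  have bd: "\<And>x. \<bar>x\<bar> \<le> 1 \<Longrightarrow> \<bar>poly P x\<bar> \<le> 1" using sup_bound[OF sn] .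
  have pars: "(\<Sum>m\<le>d. (c m)\<^sup>2) \<le> 2" by (rule parseval[OF cP bd])
  have sabs: "(\<Sum>m\<le>d. \<bar>c m\<bar>) \<le> 2 * sqrt (real d)"
  proof -
    have "(\<Sum>m\<le>d. \<bar>c m\<bar>)\<^sup>2 \<le> (\<Sum>m\<le>d. \<bar>c m\<bar>\<^sup>2) * real (card {..d})"
      by (rule sum_squared_le_sum_of_squares)
    also have "\<dots> \<le> 2 * (real d + 1)"
    proof -
      have "(\<Sum>m\<le>d. (c m)\<^sup>2) * (real d + 1) \<le> 2 * (real d + 1)" using pars by (intro mult_right_mono) auto
      then show ?thesis by (simp add: add.commute)
    qed
    also have "\<dots> \<le> (2 * sqrt (real d))\<^sup>2" using d1 by (simp add: power_mult_distrib)
    finally have "(\<Sum>m\<le>d. \<bar>c m\<bar>)\<^sup>2 \<le> (2 * sqrt (real d))\<^sup>2" .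
    then show ?thesis by (rule power2_le_imp_le) simp
  qed
  have pt: "\<bar>poly (high_part k P) x\<bar> \<le> K k * 2 ^ (k + 1) * real d ^ k * sqrt (real d)"
    if x: "x \<in> {-1..1}" for x
  proof -
    have x1: "\<bar>x\<bar> \<le> 1" using x by auto
    have "poly (high_part k P) x = (\<Sum>m\<le>d. c m * R k m x)"
      unfolding cP R_def by (simp add: hp_sum hp_smult poly_sum)
    then have "\<bar>poly (high_part k P) x\<bar> \<le> (\<Sum>m\<le>d. \<bar>c m * R k m x\<bar>)"
      by (simp add: sum_abs)
    also have "\<dots> \<le> (\<Sum>m\<le>d. \<bar>c m\<bar> * (K k * (2 * real d) ^ k))"
    proof (rule sum_mono)
      fix m assume m: "m \<in> {..d}"
      have "\<bar>R k m x\<bar> \<le> K k * (real m + 1) ^ k" by (rule R_bound[OF x1])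
      also have "\<dots> \<le> K k * (2 * real d) ^ k"
        using m d1 K_nonneg[of k] by (intro mult_left_mono power_mono) auto
      finally show "\<bar>c m * R k m x\<bar> \<le> \<bar>c m\<bar> * (K k * (2 * real d) ^ k)"
        by (simp add: abs_mult mult_left_mono)
    qed
    also have "\<dots> = (\<Sum>m\<le>d. \<bar>c m\<bar>) * (K k * (2 * real d) ^ k)"
      by (simp add: sum_distrib_right)
    also have "\<dots> \<le> 2 * sqrt (real d) * (K k * (2 * real d) ^ k)"
      using sabs K_nonneg[of k] by (intro mult_right_mono) auto
    also have "\<dots> = K k * 2 ^ (k + 1) * real d ^ k * sqrt (real d)"
      by (simp add: power_mult_distrib)
    finally show ?thesis .
  qed
  show "sup_norm_11 (poly (high_part k P)) \<le> K k * 2 ^ (k + 1) * real d ^ k * sqrt (real d)"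
    unfolding sup_norm_11_def by (rule cSUP_least) (simp, rule pt)
qed

end
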